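(* Fix $\alpha\in(0,1/2)$, $\varepsilon\in(0,1)$, $0<r<r'<r/(1-\varepsilon)$, and let $s\in(r',r/(1-\varepsilon))$. Let $(r_n)$ be any sequence with $r_n=o(n^{-r'/(2r'+1/2)})$. Then there does not exist a confidence set $C_n=C_n(Y)\subseteq\ell^2$ such that for every $0<b<B$ and every $J_0\in\mathbb N$ both $$\liminf_{n\to\infty}\ \inf_{f\in S^r_\varepsilon(b,B,J_0)\cup S^s_\varepsilon(b,B,J_0)}\Pr_f(f\in C_n)\ge1-\alpha$$ and $$\sup_{f\in S^s_\varepsilon(b,B,J_0)}\Pr_f(|C_n|>r_n)\to0\quad(n\to\infty)$$ hold, where $|C_n|$ is the $\ell^2$-diameter of $C_n$.
   Context: Gaussian sequence model: observations $Y=(y_k)_{k\in\mathbb N}$, $y_k=f_k+n^{-1/2}g_k$, $g_k$ i.i.d. $N(0,1)$, $f\in\ell^2$; $\Pr_f$ is the law of $Y$. Sobolev norm $\|f\|_{t,2}^2=\sum_k f_k^2k^{2t}$. Convention: $\sum_{k=a}^b$ for real $a,b$ means $\sum_{k=\lceil a\rceil}^{\lfloor b\rfloor}$. For $t>0$, $\varepsilon\in(0,1)$, $J_0\in\mathbb N$, $0<b<B$, and $c(t)=16\times2^{2t+1}$, $$S^t_\varepsilon(b,B,J_0)=\Big\{f\in\ell^2:\|f\|_{t,2}\in[b,B],\ \sum_{k=2^{J(1-\varepsilon)}}^{2^J}f_k^2\ge c(t)\|f\|_{t,2}^2 2^{-2Jt}\ \forall J\in\mathbb N, J\ge J_0\Big\}.$$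 *)

theory Defs
  imports "HOL-Probability.Probability" "HOL-Library.Landau_Symbols"
begin

text \<open>Sequences are indexed by k = 1, 2, ...; coordinate 0 is unused and forced to 0.\<close>

definition l2_seq :: "(nat \<Rightarrow> real) set" where
  "l2_seq = {f. f 0 = 0 \<and> summable (\<lambda>k. (f k)\<^sup>2)}"

definition l2_dist :: "(nat \<Rightarrow> real) \<Rightarrow> (nat \<Rightarrow> real) \<Rightarrow> real" where
  "l2_dist f g = sqrt (\<Sum>k. (f k - g k)\<^sup>2)"

definition l2_diam :: "(nat \<Rightarrow> real) set \<Rightarrow> ereal" where
  "l2_diam C = (SUP f\<in>C. SUP g\<in>C. ereal (l2_dist f g))"

definition sob_norm :: "real \<Rightarrow> (nat \<Rightarrow> real) \<Rightarrow> real" where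
  "sob_norm t f = sqrt (\<Sum>k. (f k)\<^sup>2 * (real k) powr (2 * t))"

definition c_const :: "real \<Rightarrow> real" where
  "c_const t = 16 * 2 powr (2 * t + 1)"

definition S_set :: "real \<Rightarrow> real \<Rightarrow> real \<Rightarrow> real \<Rightarrow> nat \<Rightarrow> (nat \<Rightarrow> real) set" where
  "S_set t \<epsilon> b B J0 = {f \<in> l2_seq.
      summable (\<lambda>k. (f k)\<^sup>2 * (real k) powr (2 * t)) \<and>
      b \<le> sob_norm t f \<and> sob_norm t f \<le> B \<and>
      (\<forall>J::nat. J0 \<le> J \<longrightarrow>
         (\<Sum>k\<in>{nat \<lceil>2 powr (real J * (1 - \<epsilon>))\<rceil> .. 2 ^ J}. (f k)\<^sup>2)
           \<ge> c_const t * (sob_norm t f)\<^sup>2 * 2 powr (- 2 * real J * t))}"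

text \<open>Law of Y = (y_k), y_k = f_k + n^{-1/2} g_k, g_k iid N(0,1).\<close>
definition Pr_obs :: "(nat \<Rightarrow> real) \<Rightarrow> nat \<Rightarrow> (nat \<Rightarrow> real) measure" where
  "Pr_obs f n = (\<Pi>\<^sub>M k\<in>UNIV. density lborel (normal_density (f k) (1 / sqrt (real n))))"

definition obs_events :: "(nat \<Rightarrow> real) set set" where
  "obs_events = sets (\<Pi>\<^sub>M k\<in>(UNIV::nat set). (borel :: real measure))"

end

theory Submission
  imports Defs
begin


lemma (in product_prob_space) nn_integral_PiM_prod_finite:
  assumes L: "finite L" "L \<subseteq> I" and h: "\<And>i. i\<in>L \<Longrightarrow> h i \<in> borel_measurable (M i)"
  shows "(\<integral>\<^sup>+ Y. (\<Prod>i\<in>L. h i (Y i)) \<partial>PiM I M) = (\<Prod>i\<in>L. \<integral>\<^sup>+ y. h i y \<partial>M i)"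
proof -
  have "(\<integral>\<^sup>+ Y. (\<Prod>i\<in>L. h i (Y i)) \<partial>PiM I M) = (\<integral>\<^sup>+ Y. (\<Prod>i\<in>L. h i (restrict Y L i)) \<partial>PiM I M)"
    by (intro nn_integral_cong prod.cong) auto
  also have "\<dots> = (\<integral>\<^sup>+ x. (\<Prod>i\<in>L. h i (x i)) \<partial>distr (PiM I M) (PiM L M) (\<lambda>x. restrict x L))"
    using L h by (subst nn_integral_distr) (auto intro!: measurable_restrict_subset borel_measurable_prod_ennreal)
  also have "\<dots> = (\<integral>\<^sup>+ x. (\<Prod>i\<in>L. h i (x i)) \<partial>PiM L M)"
    using distr_PiM_restrict_finite[OF L] by simp
  also have "\<dots> = (\<Prod>i\<in>L. \<integral>\<^sup>+ y. h i y \<partial>M i)"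
    using L h by (intro product_nn_integral_prod) auto
  finally show ?thesis .
qed



lemma (in product_prob_space) PiM_density_finite:
  assumes K: "finite K" "K \<subseteq> I"
   and lm: "\<And>i. i\<in>K \<Longrightarrow> l i \<in> borel_measurable (M i)"
   and l1: "\<And>i. i \<in> K \<Longrightarrow> (\<integral>\<^sup>+ y. l i y \<partial>M i) = 1"
  shows "PiM I (\<lambda>i. if i \<in> K then density (M i) (l i) else M i) = density (PiM I M) (\<lambda>Y. \<Prod>i\<in>K. l i (Y i))"
proof -
  let ?M1 = "\<lambda>i. if i \<in> K then density (M i) (l i) else M i"
  have ps: "prob_space (?M1 i)" for i
  proof (cases "i \<in> K")
    case True
    then show ?thesis using l1[OF True] lm[OF True]
      by (auto intro!: prob_spaceI simp: emeasure_density)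
  qed (simp add: prob_space)
  interpret M1: product_prob_space ?M1 I
    using ps by (simp add: product_prob_space_def product_sigma_finite_def prob_space_imp_sigma_finite product_prob_space_axioms_def)
  have sets1: "sets (?M1 i) = sets (M i)" for i by simp
  have space1: "space (?M1 i) = space (M i)" for i by simp
  show ?thesis
  proof (rule M1.PiM_eq[symmetric])
    show "sets (density (PiM I M) (\<lambda>Y. \<Prod>i\<in>K. l i (Y i))) = sets (PiM I ?M1)"
      by (simp, intro sets_PiM_cong) auto
  next
    fix J F assume J: "finite J" "J \<subseteq> I" and F: "\<And>j. j \<in> J \<Longrightarrow> F j \<in> sets (?M1 j)"
    have Fs: "F j \<in> sets (M j)" if "j \<in> J" for j using F[OF that] sets1[of j] by simp
    have emb: "prod_emb I ?M1 J (Pi\<^sub>E J F) = prod_emb I M J (Pi\<^sub>E J F)"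
      by (simp add: prod_emb_def space1)
    have embs: "prod_emb I M J (Pi\<^sub>E J F) \<in> sets (PiM I M)"
      using J Fs by (intro measurable_prod_emb sets_PiM_I_finite) auto
    define h where "h i y = (if i\<in>J then indicator (F i) y else 1) * (if i\<in>K then l i y else (1::ennreal))" for i y
    have hm: "h i \<in> borel_measurable (M i)" if "i \<in> J \<union> K" for i
      using that Fs lm unfolding h_def
      by (cases "i \<in> J"; cases "i \<in> K") (auto intro!: borel_measurable_times_ennreal borel_measurable_indicator)
    have "emeasure (density (PiM I M) (\<lambda>Y. \<Prod>i\<in>K. l i (Y i))) (prod_emb I ?M1 J (Pi\<^sub>E J F))
        = (\<integral>\<^sup>+ Y. (\<Prod>i\<in>K. l i (Y i)) * indicator (prod_emb I M J (Pi\<^sub>E J F)) Y \<partial>PiM I M)"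
      using embs K lm by (simp add: emb, subst emeasure_density) (auto intro!: borel_measurable_prod_ennreal measurable_compose[OF measurable_component_singleton])
    also have "\<dots> = (\<integral>\<^sup>+ Y. (\<Prod>i\<in>J \<union> K. h i (Y i)) \<partial>PiM I M)"
    proof (intro nn_integral_cong)
      fix Y assume Y: "Y \<in> space (PiM I M)"
      have ind: "indicator (prod_emb I M J (Pi\<^sub>E J F)) Y = (\<Prod>i\<in>J. indicator (F i) (Y i) :: ennreal)"
        using Y J by (auto simp: prod_emb_def indicator_def space_PiM PiE_iff)
      have "(\<Prod>i\<in>J \<union> K. h i (Y i)) = (\<Prod>i\<in>J \<union> K. (if i\<in>J then indicator (F i) (Y i) else 1)) * (\<Prod>i\<in>J \<union> K. (if i\<in>K then l i (Y i) else 1))"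
        unfolding h_def by (simp add: prod.distrib)
      also have "\<dots> = (\<Prod>i\<in>J. indicator (F i) (Y i)) * (\<Prod>i\<in>K. l i (Y i))"
        using J K by (simp add: prod.If_cases Int_absorb1 Int_absorb2)
      finally show "(\<Prod>i\<in>K. l i (Y i)) * indicator (prod_emb I M J (Pi\<^sub>E J F)) Y = (\<Prod>i\<in>J \<union> K. h i (Y i))"
        by (simp add: ind mult.commute)
    qed
    also have "\<dots> = (\<Prod>i\<in>J \<union> K. \<integral>\<^sup>+ y. h i y \<partial>M i)"
      using J K hm by (intro nn_integral_PiM_prod_finite) auto
    also have "\<dots> = (\<Prod>i\<in>J \<union> K. if i \<in> J then emeasure (?M1 i) (F i) else 1)"
    proof (intro prod.cong refl)
      fix i assume i: "i \<in> J \<union> K"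
      show "(\<integral>\<^sup>+ y. h i y \<partial>M i) = (if i \<in> J then emeasure (?M1 i) (F i) else 1)"
      proof (cases "i \<in> J")
        case True
        then show ?thesis using Fs[OF True] lm
          by (cases "i \<in> K") (auto simp: h_def emeasure_density mult.commute)
      next
        case False
        then have "i \<in> K" using i by auto
        then show ?thesis using False l1 by (simp add: h_def)
      qed
    qed
    also have "\<dots> = (\<Prod>i\<in>J. emeasure (?M1 i) (F i))"
      using J K by (simp add: prod.If_cases Int_absorb2)
    finally show "emeasure (density (PiM I M) (\<lambda>Y. \<Prod>i\<in>K. l i (Y i))) (prod_emb I ?M1 J (Pi\<^sub>E J F)) = (\<Prod>j\<in>J. emeasure (?M1 j) (F j))" .
  qed
qed



definition ell :: "real \<Rightarrow> real \<Rightarrow> real \<Rightarrow> real" where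
  "ell \<sigma> a y = exp (a*y/\<sigma>\<^sup>2 - a\<^sup>2/(2*\<sigma>\<^sup>2))"

lemma ell_pos: "0 < ell \<sigma> a y" by (simp add: ell_def)

lemma ell_measurable[measurable]: "ell \<sigma> a \<in> borel_measurable borel"
  unfolding ell_def by measurable

lemma normal_density_ell:
  assumes "0 < \<sigma>"
  shows "normal_density 0 \<sigma> y * ell \<sigma> a y = normal_density a \<sigma> y"
proof -
  have "- (y - 0)\<^sup>2 / (2 * \<sigma>\<^sup>2) + (a*y/\<sigma>\<^sup>2 - a\<^sup>2/(2*\<sigma>\<^sup>2)) = -(y - a)\<^sup>2 / (2 * \<sigma>\<^sup>2)"
    using assms by (simp add: field_simps power2_eq_square)
  then have "exp (- (y - 0)\<^sup>2 / (2 * \<sigma>\<^sup>2)) * exp (a*y/\<sigma>\<^sup>2 - a\<^sup>2/(2*\<sigma>\<^sup>2)) = exp (-(y - a)\<^sup>2 / (2 * \<sigma>\<^sup>2))"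
    by (simp flip: exp_add)
  then show ?thesis unfolding normal_density_def ell_def by (simp add: mult.assoc)
qed

lemma ell_mult: "\<sigma> \<noteq> 0 \<Longrightarrow> ell \<sigma> a y * ell \<sigma> b y = exp (a*b/\<sigma>\<^sup>2) * ell \<sigma> (a+b) y"
proof -
  assume s: "\<sigma> \<noteq> 0"
  have "(a*y/\<sigma>\<^sup>2 - a\<^sup>2/(2*\<sigma>\<^sup>2)) + (b*y/\<sigma>\<^sup>2 - b\<^sup>2/(2*\<sigma>\<^sup>2)) = a*b/\<sigma>\<^sup>2 + ((a+b)*y/\<sigma>\<^sup>2 - (a+b)\<^sup>2/(2*\<sigma>\<^sup>2))"
    using s by (simp add: field_simps power2_eq_square)
  then show ?thesis unfolding ell_def by (simp flip: exp_add)
qed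

lemma nn_integral_normal_density_1:
  assumes "0 < \<sigma>" shows "(\<integral>\<^sup>+ y. ennreal (normal_density a \<sigma> y) \<partial>lborel) = 1"
proof -
  interpret prob_space "density lborel (normal_density a \<sigma>)"
    using assms by (rule prob_space_normal_density)
  show ?thesis using emeasure_space_1 by (simp add: emeasure_density)
qed

lemma nn_integral_ell:
  assumes "0 < \<sigma>"
  shows "(\<integral>\<^sup>+ y. ennreal (ell \<sigma> a y) \<partial>density lborel (normal_density 0 \<sigma>)) = 1"
proof -
  have "(\<integral>\<^sup>+ y. ennreal (ell \<sigma> a y) \<partial>density lborel (normal_density 0 \<sigma>))
      = (\<integral>\<^sup>+ y. ennreal (normal_density 0 \<sigma> y) * ennreal (ell \<sigma> a y) \<partial>lborel)"
    by (subst nn_integral_density) auto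
  also have "\<dots> = (\<integral>\<^sup>+ y. ennreal (normal_density a \<sigma> y) \<partial>lborel)"
    using assms by (intro nn_integral_cong) (metis ennreal_mult normal_density_ell normal_density_nonneg ell_pos less_imp_le)
  finally show ?thesis using nn_integral_normal_density_1[OF assms] by simp
qed

lemma nn_integral_ell_mult:
  assumes "0 < \<sigma>"
  shows "(\<integral>\<^sup>+ y. ennreal (ell \<sigma> a y * ell \<sigma> b y) \<partial>density lborel (normal_density 0 \<sigma>)) = ennreal (exp (a*b/\<sigma>\<^sup>2))"
proof -
  have "(\<integral>\<^sup>+ y. ennreal (ell \<sigma> a y * ell \<sigma> b y) \<partial>density lborel (normal_density 0 \<sigma>))
     = (\<integral>\<^sup>+ y. ennreal (exp (a*b/\<sigma>\<^sup>2)) * ennreal (ell \<sigma> (a+b) y) \<partial>density lborel (normal_density 0 \<sigma>))"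
    using assms by (intro nn_integral_cong) (simp add: ell_mult ell_pos less_imp_le flip: ennreal_mult)
  also have "\<dots> = ennreal (exp (a*b/\<sigma>\<^sup>2))"
    using assms by (subst nn_integral_cmult) (auto simp: nn_integral_ell)
  finally show ?thesis .
qed

lemma density_ell:
  assumes "0 < \<sigma>"
  shows "density (density lborel (normal_density 0 \<sigma>)) (\<lambda>y. ennreal (ell \<sigma> a y)) = density lborel (normal_density a \<sigma>)"
  using assms
  by (subst density_density_eq) (auto intro!: density_cong simp: ennreal_mult[symmetric] normal_density_ell normal_density_nonneg ell_pos less_imp_le)



lemma pps: "0 < \<sigma> \<Longrightarrow> product_prob_space (\<lambda>k. density lborel (normal_density (f k) \<sigma>))"
  by (simp add: product_prob_space_def product_sigma_finite_def prob_space_imp_sigma_finite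
      product_prob_space_axioms_def prob_space_normal_density)

lemma Pr_obs_prob: "0 < n \<Longrightarrow> prob_space (Pr_obs f n)"
  unfolding Pr_obs_def
  by (rule prob_space_PiM) (simp add: prob_space_normal_density)

lemma sets_Pr_obs: "sets (Pr_obs f n) = obs_events"
  unfolding Pr_obs_def obs_events_def by (intro sets_PiM_cong) auto

lemma space_Pr_obs: "space (Pr_obs f n) = UNIV"
  unfolding Pr_obs_def by (simp add: space_PiM)

lemma Pr_obs_perturb:
  assumes n: "0 < n" and K: "finite K" and f0K: "\<forall>k\<in>K. f0 k = 0" and g: "\<forall>k. k \<notin> K \<longrightarrow> g k = f0 k"
  shows "Pr_obs g n = density (Pr_obs f0 n) (\<lambda>Y. \<Prod>k\<in>K. ennreal (ell (1/sqrt n) (g k) (Y k)))"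
proof -
  define \<sigma> where "\<sigma> = 1 / sqrt (real n)"
  have \<sigma>: "0 < \<sigma>" using n by (simp add: \<sigma>_def)
  interpret product_prob_space "\<lambda>k. density lborel (normal_density (f0 k) \<sigma>)" UNIV
    using \<sigma> by (rule pps)
  have "Pr_obs f0 n = PiM UNIV (\<lambda>k. density lborel (normal_density (f0 k) \<sigma>))"
    by (simp add: Pr_obs_def \<sigma>_def)
  moreover have "PiM UNIV (\<lambda>k. if k \<in> K then density (density lborel (normal_density (f0 k) \<sigma>)) (\<lambda>y. ennreal (ell \<sigma> (g k) y)) else density lborel (normal_density (f0 k) \<sigma>))
      = density (PiM UNIV (\<lambda>k. density lborel (normal_density (f0 k) \<sigma>))) (\<lambda>Y. \<Prod>k\<in>K. ennreal (ell \<sigma> (g k) (Y k)))"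
    using K f0K \<sigma> by (intro PiM_density_finite) (auto simp: nn_integral_ell)
  moreover have "PiM UNIV (\<lambda>k. if k \<in> K then density (density lborel (normal_density (f0 k) \<sigma>)) (\<lambda>y. ennreal (ell \<sigma> (g k) y)) else density lborel (normal_density (f0 k) \<sigma>))
      = Pr_obs g n"
    unfolding Pr_obs_def \<sigma>_def[symmetric]
    using f0K g \<sigma> by (intro PiM_cong) (auto simp: density_ell)
  ultimately show ?thesis by (simp add: \<sigma>_def)
qed



lemma card_signs: "finite K \<Longrightarrow> card (PiE K (\<lambda>_. {-1::real,1})) = 2 ^ card K"
  by (simp add: card_PiE numeral_2_eq_2)

lemma comb_sum:
  assumes K: "finite K"
  defines "\<Theta> \<equiv> PiE K (\<lambda>_. {-1::real,1})"
  shows "(\<Sum>\<theta>\<in>\<Theta>. \<Sum>\<theta>'\<in>\<Theta>. \<Prod>k\<in>K. exp (a * \<theta> k * \<theta>' k))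
       = real (card \<Theta>) * real (card \<Theta>) * ((exp a + exp (-a))/2) ^ card K"
proof -
  have inner: "(\<Sum>\<theta>'\<in>\<Theta>. \<Prod>k\<in>K. exp (a * \<theta> k * \<theta>' k)) = (exp a + exp (-a)) ^ card K"
    if th: "\<theta> \<in> \<Theta>" for \<theta>
  proof -
    have "(\<Sum>\<theta>'\<in>\<Theta>. \<Prod>k\<in>K. exp (a * \<theta> k * \<theta>' k)) = (\<Prod>k\<in>K. \<Sum>v\<in>{-1::real,1}. exp (a * \<theta> k * v))"
      unfolding \<Theta>_def using K by (subst prod_sum_PiE) auto
    also have "\<dots> = (\<Prod>k\<in>K. exp a + exp (-a))"
    proof (intro prod.cong refl)
      fix k assume "k \<in> K"
      then have "\<theta> k = -1 \<or> \<theta> k = 1" using th unfolding \<Theta>_def by (auto simp: PiE_iff)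
      then show "(\<Sum>v\<in>{-1::real,1}. exp (a * \<theta> k * v)) = exp a + exp (-a)" by auto
    qed
    finally show ?thesis by simp
  qed
  have "(\<Sum>\<theta>\<in>\<Theta>. \<Sum>\<theta>'\<in>\<Theta>. \<Prod>k\<in>K. exp (a * \<theta> k * \<theta>' k)) = real (card \<Theta>) * (exp a + exp (-a)) ^ card K"
    using inner by simp
  also have "(exp a + exp (-a)) ^ card K = real (card \<Theta>) * ((exp a + exp (-a))/2) ^ card K"
    using K by (simp add: \<Theta>_def card_signs power_divide)
  finally show ?thesis by simp
qed



lemma TV_bound:
  fixes n :: nat and K :: "nat set" and f0 :: "nat \<Rightarrow> real" and \<gamma> c :: real
  assumes n: "0 < n" and K: "finite K" and f0K: "\<forall>k\<in>K. f0 k = 0" and c: "0 < c"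
    and A: "A \<in> obs_events"
  defines "\<Theta> \<equiv> PiE K (\<lambda>_. {-1::real,1})"
    and "gg \<equiv> \<lambda>\<theta> k. if k \<in> K then \<gamma> * \<theta> k else f0 k"
    and "ch \<equiv> (exp (n*\<gamma>\<^sup>2) + exp (-(n*\<gamma>\<^sup>2)))/2"
  shows "measure (Pr_obs f0 n) A \<le> (\<Sum>\<theta>\<in>\<Theta>. measure (Pr_obs (gg \<theta>) n) A) / card \<Theta> + ((ch ^ card K - 1)/(2*c) + c/2)"
proof -
  define \<sigma> where "\<sigma> = 1 / sqrt (real n)"
  have \<sigma>: "0 < \<sigma>" using n by (simp add: \<sigma>_def)
  have \<sigma>2: "x / \<sigma>\<^sup>2 = real n * x" for x using n by (simp add: \<sigma>_def power_divide)
  define M where "M = (\<lambda>k. density lborel (normal_density (f0 k) \<sigma>))"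
  interpret product_prob_space M UNIV
    unfolding M_def using \<sigma> by (rule pps)
  define P0 where "P0 = Pr_obs f0 n"
  have P0: "P0 = PiM UNIV M" by (simp add: P0_def Pr_obs_def M_def \<sigma>_def)
  have AP: "A \<in> sets P0" using A by (simp add: P0_def sets_Pr_obs)
  have cardT: "card \<Theta> = 2 ^ card K" using K by (simp add: \<Theta>_def card_signs)
  have cardpos: "0 < real (card \<Theta>)" by (simp add: cardT)
  define Lr where "Lr \<theta> Y = (\<Prod>k\<in>K. ell \<sigma> (\<gamma> * \<theta> k) (Y k))" for \<theta> and Y :: "nat \<Rightarrow> real"
  have Lr_pos: "0 < Lr \<theta> Y" for \<theta> Y unfolding Lr_def by (intro prod_pos) (simp add: ell_pos)
  have comp[measurable]: "(\<lambda>Y. Y k) \<in> borel_measurable (PiM UNIV M)" for k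
  proof -
    have "(\<lambda>Y. Y k) \<in> measurable (PiM UNIV M) (M k)" by (rule measurable_component_singleton) simp
    moreover have "sets (M k) = sets borel" by (simp add: M_def)
    ultimately show ?thesis using measurable_cong_sets[OF refl, of "M k" borel "PiM UNIV M"] by simp
  qed
  have Lr_meas[measurable]: "Lr \<theta> \<in> borel_measurable P0" for \<theta>
    unfolding Lr_def P0 using K by measurable
  have dens: "Pr_obs (gg \<theta>) n = density P0 (\<lambda>Y. ennreal (Lr \<theta> Y))" for \<theta>
  proof -
    have "Pr_obs (gg \<theta>) n = density (Pr_obs f0 n) (\<lambda>Y. \<Prod>k\<in>K. ennreal (ell (1/sqrt n) (gg \<theta> k) (Y k)))"
      using n K f0K by (intro Pr_obs_perturb) (auto simp: gg_def)
    also have "(\<lambda>Y. \<Prod>k\<in>K. ennreal (ell (1/sqrt n) (gg \<theta> k) (Y k))) = (\<lambda>Y. ennreal (Lr \<theta> Y))"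
    proof (rule ext)
      fix Y
      have "(\<Prod>k\<in>K. ennreal (ell (1/sqrt n) (gg \<theta> k) (Y k))) = (\<Prod>k\<in>K. ennreal (ell \<sigma> (\<gamma>*\<theta> k) (Y k)))"
        by (intro prod.cong) (auto simp: gg_def \<sigma>_def)
      also have "\<dots> = ennreal (Lr \<theta> Y)" unfolding Lr_def by (rule prod_ennreal) (simp add: ell_pos less_imp_le)
      finally show "(\<Prod>k\<in>K. ennreal (ell (1/sqrt n) (gg \<theta> k) (Y k))) = ennreal (Lr \<theta> Y)" .
    qed
    finally show ?thesis by (simp add: P0_def)
  qed
  have Pth: "prob_space (Pr_obs (gg \<theta>) n)" for \<theta> using n by (rule Pr_obs_prob)
  have emP: "emeasure (Pr_obs (gg \<theta>) n) B = (\<integral>\<^sup>+ Y. ennreal (Lr \<theta> Y) * indicator B Y \<partial>P0)"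
    if "B \<in> sets P0" for \<theta> B
    using that by (simp add: dens emeasure_density nn_integral_set_ennreal)
  define Lb where "Lb Y = (\<Sum>\<theta>\<in>\<Theta>. Lr \<theta> Y) / card \<Theta>" for Y
  have Lb_nn: "0 \<le> Lb Y" for Y unfolding Lb_def by (intro divide_nonneg_nonneg sum_nonneg) (auto intro: less_imp_le Lr_pos)
  have Lb_meas[measurable]: "Lb \<in> borel_measurable P0" unfolding Lb_def by measurable
  have avg: "ennreal ((\<Sum>\<theta>\<in>\<Theta>. measure (Pr_obs (gg \<theta>) n) B) / card \<Theta>) = (\<integral>\<^sup>+ Y. ennreal (Lb Y) * indicator B Y \<partial>P0)"
    if B: "B \<in> sets P0" for B
  proof -
    have pw: "ennreal (Lb Y) * indicator B Y = ennreal (1 / card \<Theta>) * (\<Sum>\<theta>\<in>\<Theta>. ennreal (Lr \<theta> Y) * indicator B Y)" for Y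
    proof (cases "Y \<in> B")
      case True
      have "ennreal (Lb Y) = ennreal (1 / card \<Theta>) * ennreal (\<Sum>\<theta>\<in>\<Theta>. Lr \<theta> Y)"
      proof -
        have sp: "0 \<le> (\<Sum>\<theta>\<in>\<Theta>. Lr \<theta> Y)" by (intro sum_nonneg less_imp_le Lr_pos)
        show ?thesis unfolding Lb_def using ennreal_mult[OF _ sp, of "1 / card \<Theta>"] by simp
      qed
      also have "ennreal (\<Sum>\<theta>\<in>\<Theta>. Lr \<theta> Y) = (\<Sum>\<theta>\<in>\<Theta>. ennreal (Lr \<theta> Y))"
        by (subst sum_ennreal) (auto intro: less_imp_le Lr_pos)
      finally show ?thesis using True by simp
    qed simp
    have "(\<integral>\<^sup>+ Y. ennreal (Lb Y) * indicator B Y \<partial>P0) = ennreal (1 / card \<Theta>) * (\<Sum>\<theta>\<in>\<Theta>. \<integral>\<^sup>+ Y. ennreal (Lr \<theta> Y) * indicator B Y \<partial>P0)"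
      using B by (simp add: pw nn_integral_cmult nn_integral_sum)
    also have "\<dots> = ennreal (1 / card \<Theta>) * (\<Sum>\<theta>\<in>\<Theta>. ennreal (measure (Pr_obs (gg \<theta>) n) B))"
      using B by (simp add: emP[symmetric] finite_measure.emeasure_eq_measure[OF prob_space.axioms(1)[OF Pth]])
    also have "\<dots> = ennreal ((\<Sum>\<theta>\<in>\<Theta>. measure (Pr_obs (gg \<theta>) n) B) / card \<Theta>)"
    proof -
      have sp: "0 \<le> (\<Sum>\<theta>\<in>\<Theta>. measure (Pr_obs (gg \<theta>) n) B)" by (intro sum_nonneg) simp
      show ?thesis using ennreal_mult[OF _ sp, of "1 / card \<Theta>"] by (subst sum_ennreal) auto
    qed
    finally show ?thesis by simp
  qed
  have Lr2: "(\<integral>\<^sup>+ Y. ennreal (Lr \<theta> Y * Lr \<theta>' Y) \<partial>P0) = ennreal (\<Prod>k\<in>K. exp (real n * \<gamma>\<^sup>2 * \<theta> k * \<theta>' k))" for \<theta> \<theta>'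
  proof -
    have "(\<integral>\<^sup>+ Y. ennreal (Lr \<theta> Y * Lr \<theta>' Y) \<partial>P0) = (\<integral>\<^sup>+ Y. (\<Prod>k\<in>K. ennreal (ell \<sigma> (\<gamma> * \<theta> k) (Y k) * ell \<sigma> (\<gamma> * \<theta>' k) (Y k))) \<partial>P0)"
      unfolding Lr_def
      by (intro nn_integral_cong) (simp add: prod.distrib[symmetric] prod_ennreal ell_pos less_imp_le)
    also have "\<dots> = (\<Prod>k\<in>K. \<integral>\<^sup>+ y. ennreal (ell \<sigma> (\<gamma> * \<theta> k) y * ell \<sigma> (\<gamma> * \<theta>' k) y) \<partial>M k)"
      unfolding P0 using K by (intro nn_integral_PiM_prod_finite) (auto simp: M_def)
    also have "\<dots> = (\<Prod>k\<in>K. ennreal (exp (real n * \<gamma>\<^sup>2 * \<theta> k * \<theta>' k)))"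
    proof (intro prod.cong refl)
      fix k assume "k \<in> K"
      then have "M k = density lborel (normal_density 0 \<sigma>)" using f0K by (simp add: M_def)
      then show "(\<integral>\<^sup>+ y. ennreal (ell \<sigma> (\<gamma> * \<theta> k) y * ell \<sigma> (\<gamma> * \<theta>' k) y) \<partial>M k) = ennreal (exp (real n * \<gamma>\<^sup>2 * \<theta> k * \<theta>' k))"
      proof -
        have e: "(\<gamma>*\<theta> k)*(\<gamma>*\<theta>' k)/\<sigma>\<^sup>2 = real n * \<gamma>\<^sup>2 * \<theta> k * \<theta>' k"
          unfolding \<sigma>2 by (simp add: power2_eq_square mult_ac)
        show ?thesis using \<sigma> \<open>M k = _\<close> by (simp add: nn_integral_ell_mult e)
      qed
    qed
    also have "\<dots> = ennreal (\<Prod>k\<in>K. exp (real n * \<gamma>\<^sup>2 * \<theta> k * \<theta>' k))"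
      by (simp add: prod_ennreal)
    finally show ?thesis .
  qed
  have chge: "1 \<le> ch"
  proof -
    have "1 + n*\<gamma>\<^sup>2 \<le> exp (n*\<gamma>\<^sup>2)" "1 + -(n*\<gamma>\<^sup>2) \<le> exp (-(n*\<gamma>\<^sup>2))" by (rule exp_ge_add_one_self)+
    then have "2 \<le> exp (n*\<gamma>\<^sup>2) + exp (-(n*\<gamma>\<^sup>2))" by linarith
    then show ?thesis unfolding ch_def by simp
  qed
  have intLb2: "(\<integral>\<^sup>+ Y. ennreal ((Lb Y)\<^sup>2) \<partial>P0) = ennreal (ch ^ card K)"
  proof -
    have pw: "ennreal ((Lb Y)\<^sup>2) = ennreal (1 / (card \<Theta> * card \<Theta>)) * (\<Sum>\<theta>\<in>\<Theta>. \<Sum>\<theta>'\<in>\<Theta>. ennreal (Lr \<theta> Y * Lr \<theta>' Y))" for Y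
    proof -
      have "(Lb Y)\<^sup>2 = (1 / (card \<Theta> * card \<Theta>)) * (\<Sum>\<theta>\<in>\<Theta>. \<Sum>\<theta>'\<in>\<Theta>. Lr \<theta> Y * Lr \<theta>' Y)"
        unfolding Lb_def power2_eq_square by (simp add: sum_product)
      moreover have "(\<Sum>\<theta>\<in>\<Theta>. \<Sum>\<theta>'\<in>\<Theta>. ennreal (Lr \<theta> Y * Lr \<theta>' Y)) = ennreal (\<Sum>\<theta>\<in>\<Theta>. \<Sum>\<theta>'\<in>\<Theta>. Lr \<theta> Y * Lr \<theta>' Y)"
        by (simp add: Lr_pos less_imp_le sum_nonneg)
      moreover have "0 \<le> (\<Sum>\<theta>\<in>\<Theta>. \<Sum>\<theta>'\<in>\<Theta>. Lr \<theta> Y * Lr \<theta>' Y)"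
        by (intro sum_nonneg) (simp add: Lr_pos less_imp_le)
      ultimately show ?thesis by (simp add: ennreal_mult[symmetric])
    qed
    have "(\<integral>\<^sup>+ Y. ennreal ((Lb Y)\<^sup>2) \<partial>P0) = ennreal (1 / (card \<Theta> * card \<Theta>)) * (\<Sum>\<theta>\<in>\<Theta>. \<Sum>\<theta>'\<in>\<Theta>. \<integral>\<^sup>+ Y. ennreal (Lr \<theta> Y * Lr \<theta>' Y) \<partial>P0)"
      by (simp add: pw nn_integral_cmult nn_integral_sum)
    also have "\<dots> = ennreal (1 / (card \<Theta> * card \<Theta>)) * ennreal (\<Sum>\<theta>\<in>\<Theta>. \<Sum>\<theta>'\<in>\<Theta>. \<Prod>k\<in>K. exp (real n * \<gamma>\<^sup>2 * \<theta> k * \<theta>' k))"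
      by (simp add: Lr2 sum_nonneg prod_nonneg)
    also have "(\<Sum>\<theta>\<in>\<Theta>. \<Sum>\<theta>'\<in>\<Theta>. \<Prod>k\<in>K. exp (real n * \<gamma>\<^sup>2 * \<theta> k * \<theta>' k)) = real (card \<Theta>) * real (card \<Theta>) * ch ^ card K"
      unfolding \<Theta>_def ch_def using comb_sum[OF K, of "real n * \<gamma>\<^sup>2"] by simp
    also have "ennreal (1 / (card \<Theta> * card \<Theta>)) * ennreal (real (card \<Theta>) * real (card \<Theta>) * ch ^ card K) = ennreal (ch ^ card K)"
      using cardpos chge by (simp add: ennreal_mult[symmetric])
    finally show ?thesis .
  qed
  have sp1: "space P0 = UNIV" by (simp add: P0_def space_Pr_obs)
  have intLb: "(\<integral>\<^sup>+ Y. ennreal (Lb Y) \<partial>P0) = 1"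
  proof -
    have "(\<integral>\<^sup>+ Y. ennreal (Lb Y) \<partial>P0) = (\<integral>\<^sup>+ Y. ennreal (Lb Y) * indicator (space P0) Y \<partial>P0)"
      by (intro nn_integral_cong) simp
    also have "\<dots> = ennreal ((\<Sum>\<theta>\<in>\<Theta>. measure (Pr_obs (gg \<theta>) n) (space P0)) / card \<Theta>)"
      by (rule avg[symmetric]) simp
    also have "(\<Sum>\<theta>\<in>\<Theta>. measure (Pr_obs (gg \<theta>) n) (space P0)) = card \<Theta>"
    proof -
      have "measure (Pr_obs (gg \<theta>) n) (space P0) = 1" for \<theta>
        using prob_space.prob_space[OF Pth[of \<theta>]] by (simp add: sp1 space_Pr_obs)
      then show ?thesis by simp
    qed
    finally show ?thesis using cardpos by simp
  qed
  have e1: "emeasure P0 (space P0) = 1" unfolding P0_def by (rule prob_space.emeasure_space_1[OF Pr_obs_prob[OF n]])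
  have P01: "(\<integral>\<^sup>+ Y. c' \<partial>P0) = c'" for c' by (simp add: e1)
  define X where "X = (\<integral>\<^sup>+ Y. ennreal ((Lb Y - 1)\<^sup>2) \<partial>P0)"
  have X: "X = ennreal (ch ^ card K - 1)"
  proof -
    have pw: "ennreal ((Lb Y - 1)\<^sup>2) + 2 * ennreal (Lb Y) = ennreal ((Lb Y)\<^sup>2) + 1" for Y
    proof -
      have "ennreal ((Lb Y - 1)\<^sup>2) + 2 * ennreal (Lb Y) = ennreal ((Lb Y - 1)\<^sup>2 + 2 * Lb Y)"
        using Lb_nn[of Y] by (simp add: ennreal_plus ennreal_mult)
      also have "(Lb Y - 1)\<^sup>2 + 2 * Lb Y = (Lb Y)\<^sup>2 + 1" by (simp add: power2_eq_square algebra_simps)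
      finally show ?thesis by (simp add: ennreal_plus)
    qed
    have "X + 2 = (\<integral>\<^sup>+ Y. ennreal ((Lb Y - 1)\<^sup>2) + 2 * ennreal (Lb Y) \<partial>P0)"
      unfolding X_def by (simp add: nn_integral_add nn_integral_cmult intLb)
    also have "\<dots> = (\<integral>\<^sup>+ Y. ennreal ((Lb Y)\<^sup>2) + 1 \<partial>P0)" by (simp add: pw)
    also have "\<dots> = ennreal (ch ^ card K) + 1" by (simp add: nn_integral_add intLb2 e1)
    also have "\<dots> = ennreal (ch ^ card K - 1) + 2"
    proof -
      have h: "1 \<le> ch ^ card K" using chge by (rule one_le_power)
      have "ennreal (ch ^ card K) = ennreal (ch ^ card K - 1) + ennreal 1" using h by (subst ennreal_plus[symmetric]) auto
      then show ?thesis by (simp add: add.assoc flip: one_add_one)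
    qed
    finally have "2 + X = 2 + ennreal (ch ^ card K - 1)" by (simp add: add.commute)
    then show ?thesis by (simp add: ennreal_add_left_cancel)
  qed
  have D: "(\<integral>\<^sup>+ Y. ennreal \<bar>Lb Y - 1\<bar> \<partial>P0) \<le> ennreal ((ch ^ card K - 1)/(2*c) + c/2)"
  proof -
    have pw: "ennreal \<bar>Lb Y - 1\<bar> \<le> ennreal ((Lb Y - 1)\<^sup>2) * ennreal (1/(2*c)) + ennreal (c/2)" for Y
    proof -
      have "0 \<le> (\<bar>Lb Y - 1\<bar> - c)\<^sup>2" by simp
      then have "\<bar>Lb Y - 1\<bar> \<le> (Lb Y - 1)\<^sup>2 * (1/(2*c)) + c/2"
        using c by (simp add: power2_eq_square field_simps abs_mult_self_eq)
      then show ?thesis using c by (simp add: ennreal_mult[symmetric] ennreal_plus[symmetric] del: ennreal_plus)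
    qed
    have "(\<integral>\<^sup>+ Y. ennreal \<bar>Lb Y - 1\<bar> \<partial>P0) \<le> (\<integral>\<^sup>+ Y. ennreal ((Lb Y - 1)\<^sup>2) * ennreal (1/(2*c)) + ennreal (c/2) \<partial>P0)"
      by (intro nn_integral_mono pw)
    also have "\<dots> = X * ennreal (1/(2*c)) + ennreal (c/2)"
      unfolding X_def by (simp add: nn_integral_add nn_integral_multc e1)
    also have "\<dots> = ennreal ((ch ^ card K - 1)/(2*c) + c/2)"
      using c chge by (simp add: X ennreal_mult[symmetric] ennreal_plus[symmetric] del: ennreal_plus)
    finally show ?thesis .
  qed
  have "ennreal (measure P0 A) = (\<integral>\<^sup>+ Y. indicator A Y \<partial>P0)"
    using AP by (simp add: P0 P.emeasure_eq_measure[symmetric])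
  also have "\<dots> \<le> (\<integral>\<^sup>+ Y. ennreal (Lb Y) * indicator A Y + ennreal \<bar>Lb Y - 1\<bar> \<partial>P0)"
  proof (intro nn_integral_mono)
    fix Y
    show "indicator A Y \<le> ennreal (Lb Y) * indicator A Y + ennreal \<bar>Lb Y - 1\<bar>"
    proof (cases "Y \<in> A")
      case True
      have "1 \<le> Lb Y + \<bar>Lb Y - 1\<bar>" by linarith
      then have "ennreal 1 \<le> ennreal (Lb Y + \<bar>Lb Y - 1\<bar>)" by (rule ennreal_leI)
      then show ?thesis using True Lb_nn[of Y] by (simp add: ennreal_plus)
    qed simp
  qed
  also have "\<dots> = (\<integral>\<^sup>+ Y. ennreal (Lb Y) * indicator A Y \<partial>P0) + (\<integral>\<^sup>+ Y. ennreal \<bar>Lb Y - 1\<bar> \<partial>P0)"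
    using AP by (intro nn_integral_add) auto
  also have "\<dots> \<le> ennreal ((\<Sum>\<theta>\<in>\<Theta>. measure (Pr_obs (gg \<theta>) n) A) / card \<Theta>) + ennreal ((ch ^ card K - 1)/(2*c) + c/2)"
    using avg[OF AP] D by (intro add_mono) auto
  also have "\<dots> = ennreal ((\<Sum>\<theta>\<in>\<Theta>. measure (Pr_obs (gg \<theta>) n) A) / card \<Theta> + ((ch ^ card K - 1)/(2*c) + c/2))"
    using c chge by (intro ennreal_plus[symmetric]) (auto intro!: sum_nonneg divide_nonneg_nonneg)
  finally show ?thesis
    using c chge by (subst (asm) ennreal_le_iff) (auto intro!: add_nonneg_nonneg sum_nonneg divide_nonneg_nonneg simp: P0_def)
qed



lemma ch_bound:
  fixes a d :: real and m :: nat
  assumes a: "0 \<le> a" and m: "1 \<le> m" and md: "m * a\<^sup>2 \<le> d" and d: "d \<le> 1/2"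
  shows "((exp a + exp (-a))/2) ^ m - 1 \<le> 2 * d"
proof -
  have a2: "a\<^sup>2 \<le> d" using m md a mult_right_mono[of 1 "real m" "a\<^sup>2"] by simp
  have a1: "a \<le> 1"
  proof (rule ccontr)
    assume "\<not> a \<le> 1" then have "1 < a\<^sup>2" by simp
    with a2 d show False by simp
  qed
  have e1: "exp a \<le> 1 + a + a\<^sup>2" using a a1 by (rule exp_bound)
  have e2: "exp (-a) \<le> 1 - a + a\<^sup>2"
  proof -
    have "1 + a \<le> exp a" by simp
    then have "exp (-a) \<le> 1 / (1 + a)" using a by (simp add: exp_minus field_simps)
    also have "\<dots> \<le> 1 - a + a\<^sup>2"
    proof -
      have "0 \<le> a*a*a" using a by simp
      then have "1 \<le> (1+a)*(1-a+a\<^sup>2)" by (simp add: algebra_simps power2_eq_square)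
      then show ?thesis using a by (simp add: divide_le_eq mult.commute)
    qed
    finally show ?thesis .
  qed
  have ch: "(exp a + exp (-a))/2 \<le> 1 + a\<^sup>2" using e1 e2 by simp
  have chnn: "0 \<le> (exp a + exp (-a))/2" by (simp add: add_nonneg_nonneg)
  have "((exp a + exp (-a))/2) ^ m \<le> (1 + a\<^sup>2) ^ m" using ch chnn by (rule power_mono)
  also have "\<dots> \<le> exp (a\<^sup>2) ^ m" by (intro power_mono) (auto simp: add_nonneg_nonneg)
  also have "\<dots> = exp (m * a\<^sup>2)" by (simp add: exp_of_nat_mult)
  also have "\<dots> \<le> exp d" using md by simp
  also have "\<dots> \<le> 1 + 2 * d" using real_exp_bound_lemma[of d] d md
    by (smt (verit, del_insts) mult_nonneg_nonneg of_nat_0_le_iff zero_le_power2)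
  finally show ?thesis by simp
qed



definition gam2 :: "real \<Rightarrow> real \<Rightarrow> nat \<Rightarrow> real" where
  "gam2 \<eta> r j = \<eta> / (2^j * (2^(j+1)) powr (2*r))"

lemma level_bounds:
  fixes x r \<eta> :: real and n :: nat
  assumes r: "0 < r" and \<eta>: "0 < \<eta>" and x: "1 < x"
  defines "j \<equiv> nat \<lceil>log 2 x\<rceil>"
  shows "1 \<le> j"
    and "(2^j - 1) * gam2 \<eta> r j \<ge> \<eta> / (2 * 4 powr (2*r)) * x powr (-(2*r))"
    and "(2^j - 1) * (real n * gam2 \<eta> r j)\<^sup>2 \<le> \<eta>\<^sup>2 * (real n)\<^sup>2 * x powr (-(1+4*r))"
proof -
  have lx: "0 < log 2 x" using x by simp
  show j1: "1 \<le> j" unfolding j_def using lx by linarith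
  define p where "p = (2::real)^j"
  have pj: "p = 2 powr (real j)" by (simp add: p_def powr_realpow)
  have jc: "real j = real_of_int \<lceil>log 2 x\<rceil>" unfolding j_def using lx by simp
  have px: "x \<le> p"
  proof -
    have "x = 2 powr (log 2 x)" using x by simp
    also have "\<dots> \<le> 2 powr (real j)" unfolding jc by (intro powr_mono) auto
    finally show ?thesis by (simp add: pj)
  qed
  have p2x: "p \<le> 2 * x"
  proof -
    have "real j \<le> log 2 x + 1" unfolding jc by linarith
    then have "2 powr (real j) \<le> 2 powr (log 2 x + 1)" by (intro powr_mono) auto
    also have "\<dots> = 2 * x" using x by (simp add: powr_add)
    finally show ?thesis by (simp add: pj)
  qed
  have p2: "2 \<le> p" unfolding p_def using j1 by (metis power_one_right power_increasing one_le_numeral)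
  have ppos: "0 < p" using p2 by simp
  have g: "gam2 \<eta> r j = \<eta> / (p * (2*p) powr (2*r))" unfolding gam2_def p_def by simp
  have qpos: "0 < (2*p) powr (2*r)" using ppos by simp
  have "\<eta> / (2 * 4 powr (2*r)) * x powr (-(2*r)) = \<eta> / (2 * (4 * x) powr (2*r))"
    using x by (simp add: powr_mult powr_minus divide_simps)
  also have "\<dots> \<le> \<eta> / (2 * (2*p) powr (2*r))"
    using x p2x r \<eta> qpos ppos by (intro divide_left_mono mult_left_mono powr_mono2) auto
  also have "\<dots> = (p/2) * gam2 \<eta> r j" unfolding g using ppos by (simp add: field_simps)
  also have "\<dots> \<le> (p - 1) * gam2 \<eta> r j"
    using p2 \<eta> ppos qpos by (intro mult_right_mono) (auto simp: g)
  finally show "(2^j - 1) * gam2 \<eta> r j \<ge> \<eta> / (2 * 4 powr (2*r)) * x powr (-(2*r))" by (simp add: p_def)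
  have "(p - 1) * (real n * gam2 \<eta> r j)\<^sup>2 \<le> p * (real n * gam2 \<eta> r j)\<^sup>2"
    by (intro mult_right_mono) auto
  also have "\<dots> = \<eta>\<^sup>2 * (real n)\<^sup>2 / (p * ((2*p) powr (2*r))\<^sup>2)"
    unfolding g using ppos qpos by (simp add: field_simps power2_eq_square)
  also have "((2*p) powr (2*r))\<^sup>2 = (2*p) powr (4*r)"
    using ppos by (simp add: power2_eq_square powr_add[symmetric])
  also have "\<eta>\<^sup>2 * (real n)\<^sup>2 / (p * (2*p) powr (4*r)) \<le> \<eta>\<^sup>2 * (real n)\<^sup>2 / (x * x powr (4*r))"
    using x px ppos r by (intro divide_left_mono mult_mono powr_mono2) auto
  also have "x * x powr (4*r) = x powr (1 + 4*r)" using x by (simp add: powr_add)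
  also have "\<eta>\<^sup>2 * (real n)\<^sup>2 / x powr (1 + 4*r) = \<eta>\<^sup>2 * (real n)\<^sup>2 * x powr (-(1+4*r))"
    by (simp only: powr_minus divide_inverse)
  finally show "(2^j - 1) * (real n * gam2 \<eta> r j)\<^sup>2 \<le> \<eta>\<^sup>2 * (real n)\<^sup>2 * x powr (-(1+4*r))"
    by (simp add: p_def)
qed



lemma level_choice:
  fixes r r' \<eta> d :: real and rn :: "nat \<Rightarrow> real"
  assumes r: "0 < r" "r < r'" and \<eta>: "0 < \<eta>" and d: "0 < d"
    and rn: "rn \<in> o(\<lambda>n. real n powr (- (r' / (2 * r' + 1/2))))"
  shows "eventually (\<lambda>n. \<exists>j::nat. 1 \<le> j \<and> rn n < sqrt ((2^j - 1) * gam2 \<eta> r j)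
           \<and> (2^j - 1) * (real n * gam2 \<eta> r j)\<^sup>2 \<le> d) sequentially"
proof -
  define \<rho> where "\<rho> = r' / (2 * r' + 1/2)"
  define a where "a = \<rho> / r"
  have \<rho>pos: "0 < \<rho>" using r by (simp add: \<rho>_def)
  have apos: "0 < a" using r \<rho>pos by (simp add: a_def)
  have ar: "a * r = \<rho>" using r by (simp add: a_def)
  define e where "e = a * (1 + 4*r) - 2"
  have epos: "0 < e"
  proof -
    have lt: "r * (4*r' + 1) < r' * (4*r + 1)" using r by (simp add: algebra_simps)
    have den: "0 < r * (4*r'+1)" using r by (intro mult_pos_pos) auto
    have "2 < 2 * r' * (4*r + 1) / (r * (4*r' + 1))" using den lt by (simp add: less_divide_eq)
    moreover have "a * (1 + 4*r) = 2 * r' * (4*r + 1) / (r * (4*r' + 1))"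
      using r by (simp add: a_def \<rho>_def field_simps)
    ultimately show ?thesis by (simp add: e_def)
  qed
  define C1 where "C1 = \<eta> / (2 * 4 powr (2*r))"
  have C1: "0 < C1" using \<eta> by (simp add: C1_def)
  define c0 where "c0 = sqrt C1 / 2"
  have c0: "0 < c0" using C1 by (simp add: c0_def)
  have E1: "eventually (\<lambda>n. norm (rn n) \<le> c0 * norm (real n powr (-\<rho>))) sequentially"
    using landau_o.smallD[OF rn c0] by (simp add: \<rho>_def)
  have "((\<lambda>n. real n powr (-e)) \<longlongrightarrow> 0) sequentially"
    using epos by (intro tendsto_neg_powr filterlim_real_sequentially) auto
  then have "((\<lambda>n. \<eta>\<^sup>2 * real n powr (-e)) \<longlongrightarrow> \<eta>\<^sup>2 * 0) sequentially"
    by (intro tendsto_mult_left)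
  then have E2: "eventually (\<lambda>n. \<eta>\<^sup>2 * real n powr (-e) < d) sequentially"
    using d by (intro order_tendstoD(2)) auto
  have E3: "eventually (\<lambda>n. 2 \<le> n) sequentially" by (rule eventually_ge_at_top)
  show ?thesis using E1 E2 E3
  proof eventually_elim
    case (elim n)
    define x where "x = real n powr a"
    have x: "1 < x" unfolding x_def using elim(3) apos by (intro gr_one_powr) auto
    define j where "j = nat \<lceil>log 2 x\<rceil>"
    note lb = level_bounds(1,2)[OF r(1) \<eta> x, folded j_def] level_bounds(3)[OF r(1) \<eta> x, of n, folded j_def]
    have npos: "0 < real n" using elim(3) by simp
    have xr: "x powr (-(2*r)) = real n powr (-(2*\<rho>))"
      unfolding x_def using npos by (simp add: powr_powr ar[symmetric] mult_ac)
    define Mj where "Mj = (2^j - 1) * gam2 \<eta> r j"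
    have Mj: "C1 * real n powr (-(2*\<rho>)) \<le> Mj"
      using lb(2) unfolding Mj_def C1_def xr by simp
    have Mjpos: "0 < Mj" using Mj C1 npos by (smt (verit) mult_pos_pos powr_gt_zero)
    have dist: "rn n < sqrt Mj"
    proof (cases "rn n \<le> 0")
      case True then show ?thesis using Mjpos by (smt (verit) real_sqrt_gt_zero)
    next
      case False
      then have "rn n \<le> c0 * real n powr (-\<rho>)" using elim(1) by simp
      then have "(rn n)\<^sup>2 \<le> (c0 * real n powr (-\<rho>))\<^sup>2" using False by (intro power_mono) auto
      also have "\<dots> = C1 / 4 * real n powr (-(2*\<rho>))"
      proof -
        have "real n powr - \<rho> * real n powr - \<rho> = real n powr (-(2*\<rho>))" by (simp add: powr_add[symmetric])
        moreover have "sqrt C1 * sqrt C1 = C1" using C1 by simp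
        ultimately show ?thesis unfolding c0_def power2_eq_square by (simp add: field_simps)
      qed
      also have "\<dots> < C1 * real n powr (-(2*\<rho>))" using C1 npos by simp
      finally have "(rn n)\<^sup>2 < Mj" using Mj by linarith
      then show ?thesis by (intro real_less_rsqrt)
    qed
    have "(2^j - 1) * (real n * gam2 \<eta> r j)\<^sup>2 \<le> \<eta>\<^sup>2 * (real n)\<^sup>2 * x powr (-(1+4*r))" by (rule lb(3))
    also have "\<eta>\<^sup>2 * (real n)\<^sup>2 * x powr (-(1+4*r)) = \<eta>\<^sup>2 * real n powr (-e)"
    proof -
      have "(real n)\<^sup>2 = real n powr 2" using npos by (simp add: powr_realpow)
      moreover have "x powr (-(1+4*r)) = real n powr (a * (-(1+4*r)))" unfolding x_def by (simp add: powr_powr)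
      ultimately have "(real n)\<^sup>2 * x powr (-(1+4*r)) = real n powr (2 + a * (-(1+4*r)))" by (simp add: powr_add)
      also have "2 + a * (-(1+4*r)) = -e" by (simp add: e_def algebra_simps)
      finally show ?thesis by (simp add: mult.assoc)
    qed
    finally have "(2^j - 1) * (real n * gam2 \<eta> r j)\<^sup>2 \<le> d" using elim(2) by linarith
    then show ?case using lb(1) dist unfolding Mj_def by blast
  qed
qed



definition f0u :: "real \<Rightarrow> nat \<Rightarrow> real" where
  "f0u u k = (if k \<in> range (\<lambda>i. 2^Suc i) then real k powr (-u) else 0)"

lemma f0u_0[simp]: "f0u u 0 = 0"
  unfolding f0u_def by auto

lemma f0u_pow: "f0u u (2^Suc i) = 2 powr (- u * real (Suc i))"
proof -
  have "real (2^Suc i) = 2 powr real (Suc i)" by (metis of_nat_numeral of_nat_power powr_realpow zero_less_numeral)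
  then have "real (2^Suc i) powr (-u) = 2 powr (- u * real (Suc i))" by (simp add: powr_powr mult.commute)
  then show ?thesis unfolding f0u_def by auto
qed

lemma strict_mono_pow2: "strict_mono (\<lambda>i::nat. (2::nat)^Suc i)"
  by (intro strict_monoI) simp

lemma f0u_summable:
  assumes "t < u"
  shows "summable (\<lambda>k. (f0u u k)\<^sup>2 * real k powr (2*t))"
proof -
  define q where "q = (2::real) powr (2*t - 2*u)"
  have q: "0 < q" "q < 1" using assms by (auto simp: q_def powr_less_one)
  have eq: "(f0u u (2^Suc i))\<^sup>2 * real (2^Suc i::nat) powr (2*t) = q * q^i" for i
  proof -
    have "real (2^Suc i::nat) = 2 powr real (Suc i)" by (metis of_nat_numeral of_nat_power powr_realpow zero_less_numeral)
    then have "real (2^Suc i::nat) powr (2*t) = 2 powr (2*t * real (Suc i))" by (simp add: powr_powr mult.commute)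
    moreover have "(f0u u (2^Suc i))\<^sup>2 = 2 powr (- 2 * u * real (Suc i))"
      by (subst f0u_pow) (simp add: power2_eq_square powr_add[symmetric] mult.assoc)
    ultimately have "(f0u u (2^Suc i))\<^sup>2 * real (2^Suc i::nat) powr (2*t) = 2 powr ((2*t - 2*u) * real (Suc i))"
      by (simp add: powr_add[symmetric] algebra_simps)
    also have "\<dots> = q powr real (Suc i)" by (simp add: q_def powr_powr)
    also have "\<dots> = q ^ Suc i" by (rule powr_realpow[OF q(1)])
    finally show ?thesis by simp
  qed
  have "summable (\<lambda>i. q * q^i)" using q by (intro summable_mult summable_geometric) auto
  then have "summable (\<lambda>i. (f0u u (2^Suc i))\<^sup>2 * real (2^Suc i::nat) powr (2*t))" unfolding eq .
  then show ?thesis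
    by (subst summable_mono_reindex[OF strict_mono_pow2, symmetric]) (auto simp: f0u_def)
qed

lemma f0u_pos:
  assumes "t < u"
  shows "0 < (\<Sum>k. (f0u u k)\<^sup>2 * real k powr (2*t))"
proof -
  have "f0u u 2 = 2 powr (-u)" using f0u_pow[of u 0] by simp
  then have "0 < (f0u u 2)\<^sup>2 * real 2 powr (2*t)" by simp
  moreover have "\<And>n. 0 \<le> (f0u u n)\<^sup>2 * real n powr (2*t)" by simp
  ultimately show ?thesis using suminf_pos2[OF f0u_summable[OF assms]] by blast
qed

lemma l2_from_sob:
  fixes g :: "nat \<Rightarrow> real"
  assumes "g 0 = 0" "0 \<le> t" "summable (\<lambda>k. (g k)\<^sup>2 * real k powr (2*t))"
  shows "summable (\<lambda>k. (g k)\<^sup>2)"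
proof (rule summable_comparison_test[OF _ assms(3)])
  show "\<exists>N. \<forall>n\<ge>N. norm ((g n)\<^sup>2) \<le> (g n)\<^sup>2 * real n powr (2*t)"
  proof (intro exI allI impI)
    fix n :: nat assume "1 \<le> n"
    then have "1 \<le> real n powr (2*t)" using assms(2) by (intro ge_one_powr_ge_zero) auto
    then show "norm ((g n)\<^sup>2) \<le> (g n)\<^sup>2 * real n powr (2*t)"
      by (simp add: mult_le_cancel_left1)
  qed
qed



lemma block_lb:
  fixes J :: nat and g :: "nat \<Rightarrow> real"
  assumes J: "1 \<le> J" and \<epsilon>: "0 < \<epsilon>" "\<epsilon> < 1" and u: "0 < u" and gf: "\<And>k. (f0u u k)\<^sup>2 \<le> (g k)\<^sup>2"
  shows "2 powr (-2*u*(real J*(1-\<epsilon>)+1)) \<le> (\<Sum>k\<in>{nat \<lceil>2 powr (real J*(1-\<epsilon>))\<rceil> .. 2^J}. (g k)\<^sup>2)"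
proof -
  define x where "x = real J*(1-\<epsilon>)"
  have x0: "0 < x" using J \<epsilon> by (simp add: x_def)
  have xJ: "x \<le> real J" using J \<epsilon> by (simp add: x_def mult_left_le)
  define i0 where "i0 = nat \<lceil>x\<rceil>"
  have i01: "1 \<le> i0" unfolding i0_def using x0 by linarith
  have i0J: "i0 \<le> J" unfolding i0_def using xJ by (simp add: ceiling_le_iff nat_le_iff)
  have i0x: "real i0 \<le> x + 1" unfolding i0_def using x0 by linarith
  have xi0: "x \<le> real i0" unfolding i0_def using x0 by linarith
  obtain i1 where i1: "i0 = Suc i1" using i01 by (cases i0) auto
  have fk: "f0u u (2^i0) = 2 powr (- u * real i0)" unfolding i1 by (rule f0u_pow)
  have "2 powr (-2*u*(x+1)) \<le> 2 powr (-2*u*real i0)"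
    using u i0x by (intro powr_mono) auto
  also have "2 powr (-2*u*real i0) = (f0u u (2^i0))\<^sup>2"
    by (simp add: fk power2_eq_square powr_add[symmetric] mult.assoc)
  also have "\<dots> \<le> (g (2^i0))\<^sup>2" by (rule gf)
  also have "\<dots> \<le> (\<Sum>k\<in>{nat \<lceil>2 powr x\<rceil> .. 2^J}. (g k)\<^sup>2)"
  proof (rule member_le_sum)
    have "2 powr x \<le> 2 powr real i0" using xi0 by (intro powr_mono) auto
    also have "2 powr real i0 = real (2^i0)" by (simp add: powr_realpow)
    finally have "\<lceil>2 powr x\<rceil> \<le> int (2^i0)" by (simp add: ceiling_le_iff)
    then have "nat \<lceil>2 powr x\<rceil> \<le> 2^i0" by (simp add: nat_le_iff)
    moreover have "(2::nat)^i0 \<le> 2^J" using i0J by (intro power_increasing) auto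
    ultimately show "2^i0 \<in> {nat \<lceil>2 powr x\<rceil> .. 2^J}" by simp
  qed auto
  finally show ?thesis by (simp add: x_def)
qed

lemma J0_choice:
  fixes \<kappa> u cN :: real
  assumes \<kappa>: "0 < \<kappa>" and cN: "0 < cN" and \<epsilon>: "\<epsilon> < 1" and kdef: "\<kappa> = t - u*(1-\<epsilon>)"
  shows "\<exists>J0::nat. 1 \<le> J0 \<and> (\<forall>J::nat. J0 \<le> J \<longrightarrow> cN * 2 powr (- 2 * real J * t) \<le> 2 powr (-2*u*(real J*(1-\<epsilon>)+1)))"
proof -
  define J0 where "J0 = max 1 (nat \<lceil>(\<bar>log 2 cN\<bar> + \<bar>2*u\<bar>)/(2*\<kappa>)\<rceil>)"
  have "cN * 2 powr (- 2 * real J * t) \<le> 2 powr (-2*u*(real J*(1-\<epsilon>)+1))" if J: "J0 \<le> J" for J :: nat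
  proof -
    have "(\<bar>log 2 cN\<bar> + \<bar>2*u\<bar>)/(2*\<kappa>) \<le> real J" using J unfolding J0_def by linarith
    then have "\<bar>log 2 cN\<bar> + \<bar>2*u\<bar> \<le> real J * (2*\<kappa>)" using \<kappa> by (simp add: divide_le_eq)
    then have ex: "log 2 cN - 2 * real J * t \<le> -2*u*(real J*(1-\<epsilon>)+1)"
      unfolding kdef by (simp add: algebra_simps)
    have "cN * 2 powr (- 2 * real J * t) = 2 powr (log 2 cN - 2 * real J * t)"
      using cN by (simp add: powr_diff powr_minus divide_inverse)
    also have "\<dots> \<le> 2 powr (-2*u*(real J*(1-\<epsilon>)+1))" using ex by (intro powr_mono) auto
    finally show ?thesis .
  qed
  then show ?thesis by (intro exI[of _ J0]) (auto simp: J0_def)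
qed



lemma f0u_K: "k \<in> {2^j<..<2^(j+1)} \<Longrightarrow> f0u u k = 0"
proof -
  assume k: "k \<in> {2^j<..<2^(j+1)}"
  have "k \<notin> range (\<lambda>i. (2::nat)^Suc i)"
  proof
    assume "k \<in> range (\<lambda>i. (2::nat)^Suc i)"
    then obtain i where i: "k = 2^Suc i" by auto
    have "(2::nat)^j < 2^Suc i" "(2::nat)^Suc i < 2^(j+1)" using k i by auto
    then have "j < Suc i" "Suc i < j + 1" by (simp_all only: power_strict_increasing_iff[of 2] one_less_numeral_iff semiring_norm(76))
    then show False by simp
  qed
  then show ?thesis by (simp add: f0u_def)
qed

lemma pert_props:
  fixes u r :: real and j :: nat and \<theta> g :: "nat \<Rightarrow> real"
  assumes r: "0 < r" and ru: "r < u"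
    and th: "\<theta> \<in> PiE {2^j<..<2^(j+1)} (\<lambda>_. {-1,1})"
    and g_def0: "g = (\<lambda>k. if k \<in> {(2::nat)^j<..<2^(j+1)} then sqrt (gam2 1 r j) * \<theta> k else f0u u k)"
  defines "K \<equiv> {(2::nat)^j<..<2^(j+1)}"
  shows "g 0 = 0"
    and "\<And>k. (f0u u k)\<^sup>2 \<le> (g k)\<^sup>2"
    and "summable (\<lambda>k. (g k)\<^sup>2 * real k powr (2*r))"
    and "(\<Sum>k. (f0u u k)\<^sup>2 * real k powr (2*r)) \<le> (\<Sum>k. (g k)\<^sup>2 * real k powr (2*r))"
    and "(\<Sum>k. (g k)\<^sup>2 * real k powr (2*r)) \<le> (\<Sum>k. (f0u u k)\<^sup>2 * real k powr (2*r)) + 1"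
    and "l2_dist (f0u u) g = sqrt ((2^j - 1) * gam2 1 r j)"
proof -
  have g_def: "g = (\<lambda>k. if k \<in> K then sqrt (gam2 1 r j) * \<theta> k else f0u u k)"
    unfolding K_def by (rule g_def0)
  have gpos: "0 < gam2 1 r j" by (simp add: gam2_def)
  have th2: "(\<theta> k)\<^sup>2 = 1" if "k \<in> K" for k
  proof -
    have "\<theta> k = -1 \<or> \<theta> k = 1" using th that unfolding K_def by (auto simp: PiE_iff)
    then show ?thesis by auto
  qed
  have fK: "f0u u k = 0" if "k \<in> K" for k using that f0u_K unfolding K_def by blast
  show "g 0 = 0" by (simp add: g_def K_def)
  show "(f0u u k)\<^sup>2 \<le> (g k)\<^sup>2" for k by (cases "k \<in> K") (auto simp: g_def fK)
  have finK: "finite K" by (simp add: K_def)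
  have gsq: "(g k)\<^sup>2 * real k powr (2*r) = (f0u u k)\<^sup>2 * real k powr (2*r) + (if k \<in> K then gam2 1 r j * real k powr (2*r) else 0)" for k
    using gpos by (cases "k \<in> K") (auto simp: g_def fK power_mult_distrib th2 less_imp_le)
  define N where "N = (\<Sum>k. (f0u u k)\<^sup>2 * real k powr (2*r))"
  define E where "E = (\<Sum>k\<in>K. gam2 1 r j * real k powr (2*r))"
  have s1: "(\<lambda>k. (f0u u k)\<^sup>2 * real k powr (2*r)) sums N"
    unfolding N_def using f0u_summable[OF ru] by (simp add: summable_sums)
  have s2: "(\<lambda>k. if k \<in> K then gam2 1 r j * real k powr (2*r) else 0) sums E"
    unfolding E_def using finK by (rule sums_If_finite_set)
  have sg: "(\<lambda>k. (g k)\<^sup>2 * real k powr (2*r)) sums (N + E)"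
    unfolding gsq using sums_add[OF s1 s2] .
  show "summable (\<lambda>k. (g k)\<^sup>2 * real k powr (2*r))" using sg by (rule sums_summable)
  have sgE: "(\<Sum>k. (g k)\<^sup>2 * real k powr (2*r)) = N + E" using sg by (rule sums_unique[symmetric])
  have E0: "0 \<le> E" unfolding E_def using gpos by (intro sum_nonneg) auto
  show "(\<Sum>k. (f0u u k)\<^sup>2 * real k powr (2*r)) \<le> (\<Sum>k. (g k)\<^sup>2 * real k powr (2*r))"
    using E0 by (simp add: sgE N_def)
  have cardK: "card K = 2^j - 1" by (simp add: K_def)
  have E1: "E \<le> 1"
  proof -
    have "E \<le> (\<Sum>k\<in>K. gam2 1 r j * (2^(j+1)) powr (2*r))"
      unfolding E_def
    proof (intro sum_mono mult_left_mono powr_mono2)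
      fix k assume "k \<in> K"
      then have "k \<le> 2^(j+1)" by (simp add: K_def)
      then show "real k \<le> 2^(j+1)" by (metis of_nat_le_iff of_nat_numeral of_nat_power)
    qed (use r gpos in auto)
    also have "\<dots> = real (card K) * gam2 1 r j * (2^(j+1)) powr (2*r)" by simp
    also have "\<dots> \<le> 2^j * gam2 1 r j * (2^(j+1)) powr (2*r)"
      using gpos by (intro mult_right_mono) (auto simp: cardK)
    also have "\<dots> = 1" by (simp add: gam2_def)
    finally show ?thesis .
  qed
  show "(\<Sum>k. (g k)\<^sup>2 * real k powr (2*r)) \<le> (\<Sum>k. (f0u u k)\<^sup>2 * real k powr (2*r)) + 1"
    using E1 by (simp add: sgE N_def)
  have dd: "(f0u u k - g k)\<^sup>2 = (if k \<in> K then gam2 1 r j else 0)" for k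
    using gpos by (cases "k \<in> K") (auto simp: g_def fK power_mult_distrib th2 less_imp_le)
  have "(\<Sum>k. (f0u u k - g k)\<^sup>2) = (\<Sum>k\<in>K. gam2 1 r j)"
    unfolding dd using sums_If_finite_set[OF finK, of "\<lambda>_. gam2 1 r j"] by (rule sums_unique[symmetric])
  also have "\<dots> = (2^j - 1) * gam2 1 r j" using cardK by (simp add: of_nat_diff)
  finally show "l2_dist (f0u u) g = sqrt ((2^j - 1) * gam2 1 r j)" by (simp add: l2_dist_def)
qed



lemma S_memI:
  fixes g :: "nat \<Rightarrow> real"
  assumes g0: "g 0 = 0" and t: "0 \<le> t" and sm: "summable (\<lambda>k. (g k)\<^sup>2 * real k powr (2*t))"
    and bB: "b \<le> sob_norm t g" "sob_norm t g \<le> B"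
    and blk: "\<And>J::nat. J0 \<le> J \<Longrightarrow> c_const t * (\<Sum>k. (g k)\<^sup>2 * real k powr (2*t)) * 2 powr (- 2 * real J * t)
                 \<le> (\<Sum>k\<in>{nat \<lceil>2 powr (real J * (1 - \<epsilon>))\<rceil> .. 2 ^ J}. (g k)\<^sup>2)"
  shows "g \<in> S_set t \<epsilon> b B J0"
proof -
  have sq: "(sob_norm t g)\<^sup>2 = (\<Sum>k. (g k)\<^sup>2 * real k powr (2*t))"
    unfolding sob_norm_def using sm by (intro real_sqrt_pow2 suminf_nonneg) auto
  show ?thesis unfolding S_set_def l2_seq_def
    using g0 l2_from_sob[OF g0 t sm] sm bB blk by (simp add: sq)
qed

lemma c_const_pos: "0 < c_const t" by (simp add: c_const_def)



theorem theorem3: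
  fixes \<alpha> \<epsilon> r r' s :: real and rn :: "nat \<Rightarrow> real"
  assumes "0 < \<alpha>" "\<alpha> < 1/2"
    and "0 < \<epsilon>" "\<epsilon> < 1"
    and "0 < r" "r < r'" "r' < r / (1 - \<epsilon>)"
    and "r' < s" "s < r / (1 - \<epsilon>)"
    and "rn \<in> o(\<lambda>n. real n powr (- (r' / (2 * r' + 1/2))))"
  shows "\<not> (\<exists>C :: nat \<Rightarrow> (nat \<Rightarrow> real) \<Rightarrow> (nat \<Rightarrow> real) set.
            (\<forall>n Y. C n Y \<subseteq> l2_seq) \<and>
            (\<forall>n. \<forall>f\<in>l2_seq. {Y. f \<in> C n Y} \<in> obs_events) \<and>
            (\<forall>n. {Y. ereal (rn n) < l2_diam (C n Y)} \<in> obs_events) \<and>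
            (\<forall>b B. \<forall>J0::nat. 0 < b \<longrightarrow> b < B \<longrightarrow> 1 \<le> J0 \<longrightarrow>
               liminf (\<lambda>n. INF f\<in>S_set r \<epsilon> b B J0 \<union> S_set s \<epsilon> b B J0.
                          emeasure (Pr_obs f n) {Y. f \<in> C n Y}) \<ge> ennreal (1 - \<alpha>) \<and>
               ((\<lambda>n. SUP f\<in>S_set s \<epsilon> b B J0.
                          emeasure (Pr_obs f n) {Y. ereal (rn n) < l2_diam (C n Y)})
                  \<longlongrightarrow> 0) sequentially))"
proof
  assume "\<exists>C :: nat \<Rightarrow> (nat \<Rightarrow> real) \<Rightarrow> (nat \<Rightarrow> real) set.
            (\<forall>n Y. C n Y \<subseteq> l2_seq) \<and>
            (\<forall>n. \<forall>f\<in>l2_seq. {Y. f \<in> C n Y} \<in> obs_events) \<and>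
            (\<forall>n. {Y. ereal (rn n) < l2_diam (C n Y)} \<in> obs_events) \<and>
            (\<forall>b B. \<forall>J0::nat. 0 < b \<longrightarrow> b < B \<longrightarrow> 1 \<le> J0 \<longrightarrow>
               liminf (\<lambda>n. INF f\<in>S_set r \<epsilon> b B J0 \<union> S_set s \<epsilon> b B J0.
                          emeasure (Pr_obs f n) {Y. f \<in> C n Y}) \<ge> ennreal (1 - \<alpha>) \<and>
               ((\<lambda>n. SUP f\<in>S_set s \<epsilon> b B J0.
                          emeasure (Pr_obs f n) {Y. ereal (rn n) < l2_diam (C n Y)})
                  \<longlongrightarrow> 0) sequentially)"
  then obtain C :: "nat \<Rightarrow> (nat \<Rightarrow> real) \<Rightarrow> (nat \<Rightarrow> real) set" where
    C1: "\<forall>n. \<forall>f\<in>l2_seq. {Y. f \<in> C n Y} \<in> obs_events" and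
    C2: "\<forall>n. {Y. ereal (rn n) < l2_diam (C n Y)} \<in> obs_events" and
    C3: "\<forall>b B. \<forall>J0::nat. 0 < b \<longrightarrow> b < B \<longrightarrow> 1 \<le> J0 \<longrightarrow>
               liminf (\<lambda>n. INF f\<in>S_set r \<epsilon> b B J0 \<union> S_set s \<epsilon> b B J0.
                          emeasure (Pr_obs f n) {Y. f \<in> C n Y}) \<ge> ennreal (1 - \<alpha>) \<and>
               ((\<lambda>n. SUP f\<in>S_set s \<epsilon> b B J0.
                          emeasure (Pr_obs f n) {Y. ereal (rn n) < l2_diam (C n Y)})
                  \<longlongrightarrow> 0) sequentially"
    by blast
  note as = assms
  have \<epsilon>1: "0 < 1 - \<epsilon>" using as by simp
  define u where "u = (s + r / (1 - \<epsilon>)) / 2"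
  have gen: "\<And>R. s < R \<Longrightarrow> s < (s+R)/2 \<and> (s+R)/2 < R" by auto
  have su1: "s < u" using gen[OF as(9)] unfolding u_def by blast
  have su2: "u < r / (1 - \<epsilon>)" using gen[OF as(9)] unfolding u_def by blast
  note su = su1 su2
  have ru: "r < u" using su as by simp
  have upos: "0 < u" using ru as by simp
  have u\<epsilon>: "u * (1 - \<epsilon>) < r" using su(2) \<epsilon>1 by (simp add: pos_less_divide_eq)
  define f0 where "f0 = f0u u"
  define Nr where "Nr = (\<Sum>k. (f0 k)\<^sup>2 * real k powr (2*r))"
  define Nsm where "Nsm = (\<Sum>k. (f0 k)\<^sup>2 * real k powr (2 * s))"
  have Nr: "0 < Nr" unfolding Nr_def f0_def by (rule f0u_pos[OF ru])
  have Nsm: "0 < Nsm" unfolding Nsm_def f0_def by (rule f0u_pos[OF su(1)])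
  define b where "b = min (sqrt Nr) (sqrt Nsm)"
  define B where "B = sqrt (Nr + 1) + sqrt Nsm + 1"
  have b0: "0 < b" using Nr Nsm by (simp add: b_def)
  have bB: "b < B" unfolding b_def B_def using Nr Nsm by (smt (verit) real_sqrt_ge_zero)
  obtain J0r :: nat where J0r: "1 \<le> J0r" "\<forall>J::nat. J0r \<le> J \<longrightarrow> c_const r * (Nr + 1) * 2 powr (- 2 * real J * r) \<le> 2 powr (-2*u*(real J*(1-\<epsilon>)+1))"
    using J0_choice[of "r - u*(1-\<epsilon>)" "c_const r * (Nr + 1)" \<epsilon> r u] u\<epsilon> Nr as c_const_pos[of r] by auto
  obtain J0s :: nat where J0s: "1 \<le> J0s" "\<forall>J::nat. J0s \<le> J \<longrightarrow> c_const s * Nsm * 2 powr (- 2 * real J * s) \<le> 2 powr (-2*u*(real J*(1-\<epsilon>)+1))"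
    using J0_choice[of "s - u*(1-\<epsilon>)" "c_const s * Nsm" \<epsilon> s u] u\<epsilon> Nsm as c_const_pos[of s] by auto
  define J0 where "J0 = max J0r J0s"
  have J01: "1 \<le> J0" using J0r by (simp add: J0_def)
  have blk_f0: "\<And>J::nat. 1 \<le> J \<Longrightarrow> (\<And>k. (f0 k)\<^sup>2 \<le> (g k)\<^sup>2) \<Longrightarrow>
      2 powr (-2*u*(real J*(1-\<epsilon>)+1)) \<le> (\<Sum>k\<in>{nat \<lceil>2 powr (real J*(1-\<epsilon>))\<rceil> .. 2^J}. (g k)\<^sup>2)" for g
    unfolding f0_def using as(3,4) upos by (intro block_lb) auto
  have f0S: "f0 \<in> S_set s \<epsilon> b B J0"
  proof (rule S_memI)
    show "f0 0 = 0" by (simp add: f0_def)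
    show "0 \<le> s" using as by simp
    show sm: "summable (\<lambda>k. (f0 k)\<^sup>2 * real k powr (2 * s))" unfolding f0_def by (rule f0u_summable[OF su(1)])
    have sn: "sob_norm s f0 = sqrt Nsm" by (simp add: sob_norm_def Nsm_def)
    show "b \<le> sob_norm s f0" by (simp add: sn b_def)
    show "sob_norm s f0 \<le> B" unfolding sn B_def using Nr by (smt (verit) real_sqrt_ge_zero)
    fix J :: nat assume J: "J0 \<le> J"
    then have J1: "1 \<le> J" and Js: "J0s \<le> J" using J01 by (auto simp: J0_def)
    have "c_const s * (\<Sum>k. (f0 k)\<^sup>2 * real k powr (2 * s)) * 2 powr (- 2 * real J * s) \<le> 2 powr (-2*u*(real J*(1-\<epsilon>)+1))"
      using J0s(2) Js by (simp add: Nsm_def)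
    also have "\<dots> \<le> (\<Sum>k\<in>{nat \<lceil>2 powr (real J*(1-\<epsilon>))\<rceil> .. 2^J}. (f0 k)\<^sup>2)"
      using blk_f0[OF J1] by auto
    finally show "c_const s * (\<Sum>k. (f0 k)\<^sup>2 * real k powr (2 * s)) * 2 powr (- 2 * real J * s) \<le> (\<Sum>k\<in>{nat \<lceil>2 powr (real J*(1-\<epsilon>))\<rceil> .. 2^J}. (f0 k)\<^sup>2)" .
  qed
  define gg where "gg = (\<lambda>j \<theta> k. if k \<in> {(2::nat)^j<..<2^(j+1)} then sqrt (gam2 1 r j) * \<theta> k else f0 k)"
  have ggS: "gg j \<theta> \<in> S_set r \<epsilon> b B J0" if th: "\<theta> \<in> PiE {2^j<..<2^(j+1)} (\<lambda>_. {-1,1})" for j \<theta>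
  proof -
    have geq: "gg j \<theta> = (\<lambda>k. if k \<in> {(2::nat)^j<..<2^(j+1)} then sqrt (gam2 1 r j) * \<theta> k else f0u u k)"
      unfolding gg_def f0_def by simp
    note pp = pert_props[OF as(5) ru th geq, folded f0_def]
    have Nr_le: "Nr \<le> (\<Sum>k. (gg j \<theta> k)\<^sup>2 * real k powr (2*r))" using pp(4) by (simp add: Nr_def)
    have le_Nr: "(\<Sum>k. (gg j \<theta> k)\<^sup>2 * real k powr (2*r)) \<le> Nr + 1" using pp(5) by (simp add: Nr_def)
    show ?thesis
    proof (rule S_memI)
      show "gg j \<theta> 0 = 0" by (rule pp(1))
      show "0 \<le> r" using as by simp
      show "summable (\<lambda>k. (gg j \<theta> k)\<^sup>2 * real k powr (2*r))" by (rule pp(3))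
      have sn: "sob_norm r (gg j \<theta>) = sqrt (\<Sum>k. (gg j \<theta> k)\<^sup>2 * real k powr (2*r))" by (simp add: sob_norm_def)
      show "b \<le> sob_norm r (gg j \<theta>)" unfolding sn b_def using Nr_le by (smt (verit) real_sqrt_le_mono)
      show "sob_norm r (gg j \<theta>) \<le> B" unfolding sn B_def using le_Nr Nsm
        by (smt (verit) real_sqrt_le_mono real_sqrt_ge_zero)
      fix J :: nat assume J: "J0 \<le> J"
      then have J1: "1 \<le> J" and Jr: "J0r \<le> J" using J01 by (auto simp: J0_def)
      have "c_const r * (\<Sum>k. (gg j \<theta> k)\<^sup>2 * real k powr (2*r)) * 2 powr (- 2 * real J * r) \<le> c_const r * (Nr + 1) * 2 powr (- 2 * real J * r)"
        using le_Nr c_const_pos[of r] by (intro mult_right_mono mult_left_mono) auto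
      also have "\<dots> \<le> 2 powr (-2*u*(real J*(1-\<epsilon>)+1))" using J0r(2) Jr by simp
      also have "\<dots> \<le> (\<Sum>k\<in>{nat \<lceil>2 powr (real J*(1-\<epsilon>))\<rceil> .. 2^J}. (gg j \<theta> k)\<^sup>2)"
        using blk_f0[OF J1] pp(2) by auto
      finally show "c_const r * (\<Sum>k. (gg j \<theta> k)\<^sup>2 * real k powr (2*r)) * 2 powr (- 2 * real J * r) \<le> (\<Sum>k\<in>{nat \<lceil>2 powr (real J*(1-\<epsilon>))\<rceil> .. 2^J}. (gg j \<theta> k)\<^sup>2)" .
    qed
  qed
  have gdist: "l2_dist f0 (gg j \<theta>) = sqrt ((2^j - 1) * gam2 1 r j)" if th: "\<theta> \<in> PiE {2^j<..<2^(j+1)} (\<lambda>_. {-1,1})" for j \<theta>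
  proof -
    have geq: "gg j \<theta> = (\<lambda>k. if k \<in> {(2::nat)^j<..<2^(j+1)} then sqrt (gam2 1 r j) * \<theta> k else f0u u k)"
      unfolding gg_def f0_def by simp
    show ?thesis using pert_props(6)[OF as(5) ru th geq] by (simp add: f0_def)
  qed
  have f0l2: "f0 \<in> l2_seq" using f0S by (simp add: S_set_def)
  define \<delta> where "\<delta> = (1 - 2*\<alpha>)/4"
  have \<delta>: "0 < \<delta>" "\<delta> < 1/4" using as by (auto simp: \<delta>_def)
  have C3': "liminf (\<lambda>n. INF f\<in>S_set r \<epsilon> b B J0 \<union> S_set s \<epsilon> b B J0.
                          emeasure (Pr_obs f n) {Y. f \<in> C n Y}) \<ge> ennreal (1 - \<alpha>)"
     "((\<lambda>n. SUP f\<in>S_set s \<epsilon> b B J0.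
                          emeasure (Pr_obs f n) {Y. ereal (rn n) < l2_diam (C n Y)}) \<longlongrightarrow> 0) sequentially"
    using C3 b0 bB J01 by blast+
  have Ev1: "eventually (\<lambda>n. ennreal (1 - \<alpha> - \<delta>) < (INF f\<in>S_set r \<epsilon> b B J0 \<union> S_set s \<epsilon> b B J0.
                          emeasure (Pr_obs f n) {Y. f \<in> C n Y})) sequentially"
  proof -
    have "ennreal (1 - \<alpha> - \<delta>) < ennreal (1 - \<alpha>)" using \<delta> as by (subst ennreal_less_iff) auto
    then show ?thesis using C3'(1) unfolding le_Liminf_iff by blast
  qed
  have Ev2: "eventually (\<lambda>n. (SUP f\<in>S_set s \<epsilon> b B J0.
                          emeasure (Pr_obs f n) {Y. ereal (rn n) < l2_diam (C n Y)}) < ennreal \<delta>) sequentially"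
    using C3'(2) \<delta> by (intro order_tendstoD(2)) auto
  have Ev3: "eventually (\<lambda>n. \<exists>j::nat. 1 \<le> j \<and> rn n < sqrt ((2^j - 1) * gam2 1 r j)
           \<and> (2^j - 1) * (real n * gam2 1 r j)\<^sup>2 \<le> \<delta>\<^sup>2/4) sequentially"
    using \<delta> by (intro level_choice[OF as(5,6) _ _ as(10)]) auto
  have Ev4: "eventually (\<lambda>n. 1 \<le> n) sequentially" by (rule eventually_ge_at_top)
  have "eventually (\<lambda>n. ennreal (1 - \<alpha> - \<delta>) < (INF f\<in>S_set r \<epsilon> b B J0 \<union> S_set s \<epsilon> b B J0.
                          emeasure (Pr_obs f n) {Y. f \<in> C n Y}) \<and>
      (SUP f\<in>S_set s \<epsilon> b B J0. emeasure (Pr_obs f n) {Y. ereal (rn n) < l2_diam (C n Y)}) < ennreal \<delta> \<and>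
      (\<exists>j::nat. 1 \<le> j \<and> rn n < sqrt ((2^j - 1) * gam2 1 r j) \<and> (2^j - 1) * (real n * gam2 1 r j)\<^sup>2 \<le> \<delta>\<^sup>2/4) \<and> 1 \<le> n) sequentially"
    using Ev1 Ev2 Ev3 Ev4 by eventually_elim blast
  then obtain n where
    n1: "ennreal (1 - \<alpha> - \<delta>) < (INF f\<in>S_set r \<epsilon> b B J0 \<union> S_set s \<epsilon> b B J0. emeasure (Pr_obs f n) {Y. f \<in> C n Y})" and
    n2: "(SUP f\<in>S_set s \<epsilon> b B J0. emeasure (Pr_obs f n) {Y. ereal (rn n) < l2_diam (C n Y)}) < ennreal \<delta>" and
    n3: "\<exists>j::nat. 1 \<le> j \<and> rn n < sqrt ((2^j - 1) * gam2 1 r j) \<and> (2^j - 1) * (real n * gam2 1 r j)\<^sup>2 \<le> \<delta>\<^sup>2/4" and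
    n4: "1 \<le> n"
    unfolding eventually_sequentially by blast
  obtain j :: nat where j1: "1 \<le> j" and jd: "rn n < sqrt ((2^j - 1) * gam2 1 r j)"
    and jc: "(2^j - 1) * (real n * gam2 1 r j)\<^sup>2 \<le> \<delta>\<^sup>2/4" using n3 by blast
  have npos: "0 < n" using n4 by simp
  define K where "K = {(2::nat)^j<..<2^(j+1)}"
  define \<Theta> where "\<Theta> = PiE K (\<lambda>_. {-1::real,1})"
  define \<gamma> where "\<gamma> = sqrt (gam2 1 r j)"
  have gpos: "0 < gam2 1 r j" by (simp add: gam2_def)
  have \<gamma>2: "\<gamma>\<^sup>2 = gam2 1 r j" using gpos by (simp add: \<gamma>_def)
  have finK: "finite K" by (simp add: K_def)
  have f0K: "\<forall>k\<in>K. f0 k = 0" unfolding K_def f0_def using f0u_K by blast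
  have cardK: "real (card K) = 2^j - 1" by (simp add: K_def of_nat_diff)
  have cardK1: "1 \<le> card K"
  proof -
    have "(2::nat)^1 \<le> 2^j" using j1 by (intro power_increasing) auto
    then show ?thesis by (simp add: K_def)
  qed
  define A where "A = {Y. f0 \<in> C n Y} - {Y. ereal (rn n) < l2_diam (C n Y)}"
  have ev1: "{Y. f0 \<in> C n Y} \<in> obs_events" using C1 f0l2 by blast
  have ev2: "{Y. ereal (rn n) < l2_diam (C n Y)} \<in> obs_events" using C2 by blast
  have Aev: "A \<in> obs_events" unfolding A_def using ev1 ev2 unfolding obs_events_def by (rule sets.Diff)
  interpret P0: prob_space "Pr_obs f0 n" using npos by (rule Pr_obs_prob)
  have sP0: "sets (Pr_obs f0 n) = obs_events" by (rule sets_Pr_obs)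
  have ad0: "0 \<le> 1 - \<alpha> - \<delta>" using as by (simp add: \<delta>_def)
  have m1: "1 - \<alpha> - \<delta> < measure (Pr_obs f0 n) {Y. f0 \<in> C n Y}"
  proof -
    have "ennreal (1 - \<alpha> - \<delta>) < emeasure (Pr_obs f0 n) {Y. f0 \<in> C n Y}"
      using less_le_trans[OF n1 INF_lower[OF UnI2[OF f0S]]] .
    then show ?thesis using ad0 by (simp add: P0.emeasure_eq_measure ennreal_less_iff)
  qed
  have m2: "measure (Pr_obs f0 n) {Y. ereal (rn n) < l2_diam (C n Y)} < \<delta>"
  proof -
    have "emeasure (Pr_obs f0 n) {Y. ereal (rn n) < l2_diam (C n Y)} < ennreal \<delta>"
      using le_less_trans[OF SUP_upper[OF f0S] n2] .
    then show ?thesis using \<delta> by (simp add: P0.emeasure_eq_measure ennreal_less_iff)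
  qed
  have m3: "1 - \<alpha> - 2*\<delta> < measure (Pr_obs f0 n) A"
  proof -
    have "measure (Pr_obs f0 n) A = measure (Pr_obs f0 n) {Y. f0 \<in> C n Y} - measure (Pr_obs f0 n) ({Y. f0 \<in> C n Y} \<inter> {Y. ereal (rn n) < l2_diam (C n Y)})"
      unfolding A_def using ev1 ev2 sP0 by (intro P0.finite_measure_Diff') auto
    moreover have "measure (Pr_obs f0 n) ({Y. f0 \<in> C n Y} \<inter> {Y. ereal (rn n) < l2_diam (C n Y)}) \<le> measure (Pr_obs f0 n) {Y. ereal (rn n) < l2_diam (C n Y)}"
      using ev2 sP0 by (intro P0.finite_measure_mono) auto
    ultimately show ?thesis using m1 m2 by linarith
  qed
  have m5: "measure (Pr_obs (gg j \<theta>) n) A < \<alpha> + \<delta>" if th: "\<theta> \<in> \<Theta>" for \<theta>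
  proof -
    have th': "\<theta> \<in> PiE {2^j<..<2^(j+1)} (\<lambda>_. {-1,1})" using th by (simp add: \<Theta>_def K_def)
    have gS: "gg j \<theta> \<in> S_set r \<epsilon> b B J0" by (rule ggS[OF th'])
    interpret Pg: prob_space "Pr_obs (gg j \<theta>) n" using npos by (rule Pr_obs_prob)
    have gl2: "gg j \<theta> \<in> l2_seq" using gS by (simp add: S_set_def)
    have evg: "{Y. gg j \<theta> \<in> C n Y} \<in> obs_events" using C1 gl2 by blast
    have m4: "1 - \<alpha> - \<delta> < measure (Pr_obs (gg j \<theta>) n) {Y. gg j \<theta> \<in> C n Y}"
    proof -
      have "ennreal (1 - \<alpha> - \<delta>) < emeasure (Pr_obs (gg j \<theta>) n) {Y. gg j \<theta> \<in> C n Y}"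
        using less_le_trans[OF n1 INF_lower[OF UnI1[OF gS]]] .
      then show ?thesis using ad0 by (simp add: Pg.emeasure_eq_measure ennreal_less_iff)
    qed
    have sub: "A \<subseteq> space (Pr_obs (gg j \<theta>) n) - {Y. gg j \<theta> \<in> C n Y}"
    proof
      fix Y assume Y: "Y \<in> A"
      have "gg j \<theta> \<notin> C n Y"
      proof
        assume gC: "gg j \<theta> \<in> C n Y"
        have fC: "f0 \<in> C n Y" using Y by (simp add: A_def)
        have "ereal (rn n) < ereal (l2_dist f0 (gg j \<theta>))" using jd gdist[OF th'] by simp
        also have "\<dots> \<le> l2_diam (C n Y)" unfolding l2_diam_def
          using fC gC by (intro SUP_upper2[OF fC] SUP_upper2[OF gC]) auto
        finally show False using Y by (simp add: A_def)
      qed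
      then show "Y \<in> space (Pr_obs (gg j \<theta>) n) - {Y. gg j \<theta> \<in> C n Y}" by (simp add: space_Pr_obs)
    qed
    have "measure (Pr_obs (gg j \<theta>) n) A \<le> measure (Pr_obs (gg j \<theta>) n) (space (Pr_obs (gg j \<theta>) n) - {Y. gg j \<theta> \<in> C n Y})"
    proof -
      have "space (Pr_obs (gg j \<theta>) n) - {Y. gg j \<theta> \<in> C n Y} \<in> sets (Pr_obs (gg j \<theta>) n)"
        using evg by (intro sets.compl_sets) (simp add: sets_Pr_obs)
      then show ?thesis using sub by (intro Pg.finite_measure_mono)
    qed
    also have "\<dots> = 1 - measure (Pr_obs (gg j \<theta>) n) {Y. gg j \<theta> \<in> C n Y}"
      using evg by (intro Pg.prob_compl) (simp add: sets_Pr_obs)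
    finally show ?thesis using m4 by linarith
  qed
  have cardT: "0 < card \<Theta>" using finK by (simp add: \<Theta>_def card_signs)
  have avg: "(\<Sum>\<theta>\<in>\<Theta>. measure (Pr_obs (gg j \<theta>) n) A) / card \<Theta> \<le> \<alpha> + \<delta>"
  proof -
    have "(\<Sum>\<theta>\<in>\<Theta>. measure (Pr_obs (gg j \<theta>) n) A) \<le> (\<Sum>\<theta>\<in>\<Theta>. \<alpha> + \<delta>)"
      using m5 by (intro sum_mono) (simp add: less_imp_le)
    then show ?thesis using cardT by (simp add: divide_le_eq mult.commute)
  qed
  define ch where "ch = (exp (real n * \<gamma>\<^sup>2) + exp (-(real n * \<gamma>\<^sup>2)))/2"
  have TV: "measure (Pr_obs f0 n) A \<le> (\<Sum>\<theta>\<in>\<Theta>. measure (Pr_obs (gg j \<theta>) n) A) / card \<Theta> + ((ch ^ card K - 1)/(2*\<delta>) + \<delta>/2)"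
  proof -
    have ggeq: "gg j = (\<lambda>\<theta> k. if k \<in> K then \<gamma> * \<theta> k else f0 k)"
      unfolding gg_def K_def \<gamma>_def by simp
    show ?thesis unfolding ggeq ch_def \<Theta>_def
      by (rule TV_bound[OF npos finK f0K \<delta>(1) Aev])
  qed
  have chb: "ch ^ card K - 1 \<le> 2 * (\<delta>\<^sup>2/4)"
    unfolding ch_def \<gamma>2
  proof (rule ch_bound)
    show "0 \<le> real n * gam2 1 r j" using gpos by simp
    show "1 \<le> card K" by (rule cardK1)
    show "real (card K) * (real n * gam2 1 r j)\<^sup>2 \<le> \<delta>\<^sup>2/4" using jc by (simp add: cardK)
    have "\<delta> * \<delta> \<le> 1 * 1" using \<delta> by (intro mult_mono) auto
    then show "\<delta>\<^sup>2/4 \<le> 1/2" by (simp add: power2_eq_square)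
  qed
  have err: "(ch ^ card K - 1)/(2*\<delta>) \<le> \<delta>/4"
  proof -
    have "(ch ^ card K - 1)/(2*\<delta>) \<le> (2*(\<delta>\<^sup>2/4))/(2*\<delta>)" using chb \<delta> by (intro divide_right_mono) auto
    also have "\<dots> = \<delta>/4" using \<delta> by (simp add: power2_eq_square)
    finally show ?thesis .
  qed
  have "1 - \<alpha> - 2*\<delta> < \<alpha> + \<delta> + (\<delta>/4 + \<delta>/2)" using m3 TV avg err by linarith
  then show False using as(1,2) unfolding \<delta>_def by (simp add: field_simps)
qed


end
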